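(* Let $G=(V,E)$ be a minimal hypergraph, let $V'\subseteq V$, and let $v\in V'$. Then $\mathcal{I}_v(G[V'])=(\mathcal{I}_v(G))[V']$, i.e. inverting at $v$ and taking the induced sub-hypergraph on $V'$ commute.
   Context: A simple hypergraph is a pair $G=(V,E)$ with $V$ a finite set and $E\subseteq 2^V$. For $e,f\in E$ with $e\subseteq f$, $e$ is a subedge of $f$; $f$ is minimal if its only subedge in $E$ is itself, and $G$ is a minimal hypergraph if every edge is minimal. $\mathrm{Min}(G)$ denotes the minimal hypergraph obtained from $G$ by deleting all non-minimal edges. For $V'\subseteq V$: the induced sub-hypergraph $G[V']$ is the hypergraph $(V', E\cap 2^{V'})$ (edges of $G$ contained in $V'$); the weak induced sub-hypergraph $G\langle V'\rangle$ is the (not necessarily minimal) hypergraph $(V',\{e\cap V' : e\in E\})$. The vertex inversion of $G$ at $v\in V$ is $\mathcal{I}_v(G)=\mathrm{Min}(G\langle V\setminus\{v\}\rangle)$. For a hypergraph $H$ whose vertex set does not contain $v$, $H[V']$ means the induced sub-hypergraph on $V'$ intersected with the vertex set of $H$. (Algebraically, $\mathcal{I}_x$ applied to the hypergraph of a squarefree monomial ideal $I$ gives the hypergraph of $I(x=1)$.) *)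

theory Defs
  imports Main
begin

type_synonym 'a hypergraph = "'a set \<times> 'a set set"

definition verts :: "'a hypergraph \<Rightarrow> 'a set" where "verts G = fst G"
definition edges :: "'a hypergraph \<Rightarrow> 'a set set" where "edges G = snd G"

definition simple_hypergraph :: "'a hypergraph \<Rightarrow> bool" where
  "simple_hypergraph G \<longleftrightarrow> finite (verts G) \<and> edges G \<subseteq> Pow (verts G)"

definition is_minimal_edge :: "'a hypergraph \<Rightarrow> 'a set \<Rightarrow> bool" where
  "is_minimal_edge G f \<longleftrightarrow> f \<in> edges G \<and> (\<forall>e\<in>edges G. e \<subseteq> f \<longrightarrow> e = f)"

definition minimal_hypergraph :: "'a hypergraph \<Rightarrow> bool" where
  "minimal_hypergraph G \<longleftrightarrow> simple_hypergraph G \<and> (\<forall>f\<in>edges G. is_minimal_edge G f)"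

definition Min_hg :: "'a hypergraph \<Rightarrow> 'a hypergraph" where
  "Min_hg G = (verts G, {f. is_minimal_edge G f})"

text \<open>Induced sub-hypergraph H[V']; the vertex set is V' intersected with the vertex set
  of H (this is G[V'] for V' \<subseteq> V, and the paper's convention for H with v not a vertex).\<close>
definition induced :: "'a hypergraph \<Rightarrow> 'a set \<Rightarrow> 'a hypergraph" where
  "induced H V' = (V' \<inter> verts H, edges H \<inter> Pow (V' \<inter> verts H))"

definition weak_induced :: "'a hypergraph \<Rightarrow> 'a set \<Rightarrow> 'a hypergraph" where
  "weak_induced G V' = (V', (\<lambda>e. e \<inter> V') ` edges G)"

definition vertex_inversion :: "'a \<Rightarrow> 'a hypergraph \<Rightarrow> 'a hypergraph" where
  "vertex_inversion v G = Min_hg (weak_induced G (verts G - {v}))"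

end

theory Submission
  imports Defs
begin

theorem lemma2p9:
  fixes G :: "'a hypergraph" and V' :: "'a set" and v :: 'a
  assumes "minimal_hypergraph G"
    and "V' \<subseteq> verts G"
    and "v \<in> V'"
  shows "vertex_inversion v (induced G V') = induced (vertex_inversion v G) V'"
proof -
  obtain V E where G: "G = (V, E)" by (cases G)
  have EV: "\<forall>e\<in>E. e \<subseteq> V" using assms(1) unfolding G minimal_hypergraph_def simple_hypergraph_def verts_def edges_def by auto
  have V'V: "V' \<subseteq> V" using assms(2) unfolding G verts_def by simp
  have vs: "V' \<inter> V = V'" using V'V by auto
  have im1: "(\<lambda>e. e \<inter> (V' - {v})) ` (E \<inter> Pow V') = (\<lambda>e. e - {v}) ` (E \<inter> Pow V')" by (intro image_cong) auto
  have im2: "(\<lambda>e. e \<inter> (V - {v})) ` E = (\<lambda>e. e - {v}) ` E" using EV by (intro image_cong) auto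
  have key: "{f. f \<in> (\<lambda>e. e - {v}) ` (E \<inter> Pow V') \<and> (\<forall>g\<in>(\<lambda>e. e - {v}) ` (E \<inter> Pow V'). g \<subseteq> f \<longrightarrow> g = f)}
     = {f. f \<in> (\<lambda>e. e - {v}) ` E \<and> (\<forall>g\<in>(\<lambda>e. e - {v}) ` E. g \<subseteq> f \<longrightarrow> g = f)} \<inter> Pow (V' - {v})"
  proof (rule set_eqI, rule iffI)
    fix f assume "f \<in> {f. f \<in> (\<lambda>e. e - {v}) ` (E \<inter> Pow V') \<and> (\<forall>g\<in>(\<lambda>e. e - {v}) ` (E \<inter> Pow V'). g \<subseteq> f \<longrightarrow> g = f)}"
    then have f1: "f \<in> (\<lambda>e. e - {v}) ` (E \<inter> Pow V')" and f2: "\<forall>g\<in>(\<lambda>e. e - {v}) ` (E \<inter> Pow V'). g \<subseteq> f \<longrightarrow> g = f" by auto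
    have fs: "f \<subseteq> V' - {v}" using f1 by auto
    have "\<forall>g\<in>(\<lambda>e. e - {v}) ` E. g \<subseteq> f \<longrightarrow> g = f"
    proof (intro ballI impI)
      fix g assume "g \<in> (\<lambda>e. e - {v}) ` E" "g \<subseteq> f"
      then obtain e where e: "e \<in> E" "g = e - {v}" by auto
      have "e \<subseteq> V'" using e \<open>g \<subseteq> f\<close> fs assms(3) by auto
      then show "g = f" using f2 e \<open>g \<subseteq> f\<close> by auto
    qed
    then show "f \<in> {f. f \<in> (\<lambda>e. e - {v}) ` E \<and> (\<forall>g\<in>(\<lambda>e. e - {v}) ` E. g \<subseteq> f \<longrightarrow> g = f)} \<inter> Pow (V' - {v})"
      using f1 fs by auto
  next
    fix f assume "f \<in> {f. f \<in> (\<lambda>e. e - {v}) ` E \<and> (\<forall>g\<in>(\<lambda>e. e - {v}) ` E. g \<subseteq> f \<longrightarrow> g = f)} \<inter> Pow (V' - {v})"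
    then have f1: "f \<in> (\<lambda>e. e - {v}) ` E" and f2: "\<forall>g\<in>(\<lambda>e. e - {v}) ` E. g \<subseteq> f \<longrightarrow> g = f"
      and fs: "f \<subseteq> V' - {v}" by auto
    obtain e where e: "e \<in> E" "f = e - {v}" using f1 by auto
    have "e \<subseteq> V'" using e fs assms(3) by auto
    then have "f \<in> (\<lambda>e. e - {v}) ` (E \<inter> Pow V')" using e by auto
    then show "f \<in> {f. f \<in> (\<lambda>e. e - {v}) ` (E \<inter> Pow V') \<and> (\<forall>g\<in>(\<lambda>e. e - {v}) ` (E \<inter> Pow V'). g \<subseteq> f \<longrightarrow> g = f)}"
      using f2 by auto
  qed
  have vv: "V' \<inter> (V - {v}) = V' - {v}" using V'V by auto
  show ?thesis
    unfolding G vertex_inversion_def induced_def Min_hg_def weak_induced_def is_minimal_edge_def verts_def edges_def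
    using key im1 im2 vs vv by simp
qed

end
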